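(* Let $G=(V,E)$ be a finite, connected, triangle-free graph that contains no dominated vertices and for which $\gamma(G)\ge 3$. Then $\mathrm{cc}(G)>2$.
   Context: All graphs are finite, connected and reflexive (a loop at every vertex; moving along a loop means passing); loops are ignored for triangles and neighbourhoods. $N(u)$ is the open neighbourhood and $N[u]=N(u)\cup\{u\}$. $\gamma$ denotes domination number. A vertex $u$ is dominated if there is a vertex $v\neq u$ with $N(u)\subseteq N[v]$. Cops and Attacking Robbers: the cop player places $k$ cops on vertices, then the robber chooses a vertex. In each round the cops move (each cop moves to an adjacent vertex or passes), then the robber moves (to an adjacent vertex or passes). The cops win if after finitely many moves a cop moves onto the robber's vertex. Additionally, if the robber moves onto a vertex occupied by a cop, exactly one cop on that vertex is removed from the game; the robber's initial placement on a cop's vertex does not count as an attack. Both players play optimally. The attacking cop number $\mathrm{cc}(G)$ is the least $k$ such that $k$ cops can guarantee a win. *)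

theory Defs
  imports Main
begin

text \<open>A finite simple graph on vertex set V with adjacency relation E (loops are
  implicit: every vertex may pass, so moves go to the closed neighbourhood).\<close>

definition graph :: "'a set \<Rightarrow> ('a \<Rightarrow> 'a \<Rightarrow> bool) \<Rightarrow> bool" where
  "graph V E \<longleftrightarrow> finite V \<and> (\<forall>u v. E u v \<longrightarrow> u \<in> V \<and> v \<in> V) \<and>
     (\<forall>u v. E u v \<longrightarrow> E v u) \<and> (\<forall>u. \<not> E u u)"

definition connected_graph :: "'a set \<Rightarrow> ('a \<Rightarrow> 'a \<Rightarrow> bool) \<Rightarrow> bool" where
  "connected_graph V E \<longleftrightarrow> V \<noteq> {} \<and> (\<forall>u\<in>V. \<forall>v\<in>V. E\<^sup>*\<^sup>* u v)"

definition triangle_free :: "'a set \<Rightarrow> ('a \<Rightarrow> 'a \<Rightarrow> bool) \<Rightarrow> bool" where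
  "triangle_free V E \<longleftrightarrow> \<not> (\<exists>u\<in>V. \<exists>v\<in>V. \<exists>w\<in>V. E u v \<and> E v w \<and> E u w)"

definition open_nbhd :: "('a \<Rightarrow> 'a \<Rightarrow> bool) \<Rightarrow> 'a \<Rightarrow> 'a set" where
  "open_nbhd E u = {v. E u v}"

definition closed_nbhd :: "('a \<Rightarrow> 'a \<Rightarrow> bool) \<Rightarrow> 'a \<Rightarrow> 'a set" where
  "closed_nbhd E u = insert u (open_nbhd E u)"

definition dominated :: "'a set \<Rightarrow> ('a \<Rightarrow> 'a \<Rightarrow> bool) \<Rightarrow> 'a \<Rightarrow> bool" where
  "dominated V E u \<longleftrightarrow> (\<exists>v\<in>V. v \<noteq> u \<and> open_nbhd E u \<subseteq> closed_nbhd E v)"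

definition dominating_set :: "'a set \<Rightarrow> ('a \<Rightarrow> 'a \<Rightarrow> bool) \<Rightarrow> 'a set \<Rightarrow> bool" where
  "dominating_set V E D \<longleftrightarrow> D \<subseteq> V \<and> (\<forall>v\<in>V. v \<in> D \<or> (\<exists>d\<in>D. E d v))"

definition domination_number :: "'a set \<Rightarrow> ('a \<Rightarrow> 'a \<Rightarrow> bool) \<Rightarrow> nat" where
  "domination_number V E = (LEAST n. \<exists>D. dominating_set V E D \<and> card D = n)"

text \<open>A position with the cops to move is given by the
  list of positions of the remaining cops and the robber's vertex.  cop_win E cs r
  means: the cops, to move in this position, can force a capture in finitely many
  moves.  The cops move simultaneously (each to a vertex of its closed
  neighbourhood); if some cop lands on the robber, the cops win.  Otherwise the
  robber moves to a vertex r' of its closed neighbourhood, and if cops are on r',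
  exactly one of them is removed (remove1).\<close>

inductive cop_win :: "('a \<Rightarrow> 'a \<Rightarrow> bool) \<Rightarrow> 'a list \<Rightarrow> 'a \<Rightarrow> bool" for E where
  move: "list_all2 (\<lambda>c c'. c' \<in> closed_nbhd E c) cs cs' \<Longrightarrow>
     (r \<in> set cs' \<or> (\<forall>r'\<in>closed_nbhd E r. cop_win E (remove1 r' cs') r')) \<Longrightarrow>
     cop_win E cs r"

text \<open>k cops can guarantee a win: some initial placement of k cops beats every
  initial robber vertex (the robber's initial placement is never an attack).\<close>

definition k_cops_win :: "'a set \<Rightarrow> ('a \<Rightarrow> 'a \<Rightarrow> bool) \<Rightarrow> nat \<Rightarrow> bool" where
  "k_cops_win V E k \<longleftrightarrow> (\<exists>cs. length cs = k \<and> set cs \<subseteq> V \<and> (\<forall>r\<in>V. cop_win E cs r))"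

definition attacking_cop_number :: "'a set \<Rightarrow> ('a \<Rightarrow> 'a \<Rightarrow> bool) \<Rightarrow> nat" where
  "attacking_cop_number V E = (LEAST k. k_cops_win V E k)"

end

theory Submission
  imports Defs
begin

lemma cn_iff: "x \<in> closed_nbhd E a \<longleftrightarrow> x = a \<or> E a x"
  by (auto simp: closed_nbhd_def open_nbhd_def)

lemma no_cop_win_nil: "cop_win E cs r \<Longrightarrow> cs = [] \<Longrightarrow> False"
  by (induction rule: cop_win.induct) (auto simp: cn_iff)

lemma key_step:
  assumes g: "graph V E" and tf: "triangle_free V E" and nd: "\<forall>u\<in>V. \<not> dominated V E u"
    and sub: "set cs \<subseteq> V" and len: "length cs \<le> 2" and rV: "r \<in> V" and rn: "r \<notin> set cs"
  shows "\<exists>r'\<in>closed_nbhd E r. r' \<in> V \<and> (\<forall>c\<in>set (remove1 r' cs). r' \<notin> closed_nbhd E c)"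
proof -
  have sym: "\<And>u v. E u v \<Longrightarrow> E v u" and inV: "\<And>u v. E u v \<Longrightarrow> u \<in> V \<and> v \<in> V"
    and irr: "\<And>u. \<not> E u u" using g unfolding graph_def by blast+
  have notri: "\<And>u v w. E u v \<Longrightarrow> E v w \<Longrightarrow> E u w \<Longrightarrow> False"
    using tf inV unfolding triangle_free_def by blast
  have dom: "\<And>v. v \<in> V \<Longrightarrow> v \<noteq> r \<Longrightarrow> (\<And>x. E r x \<Longrightarrow> x = v \<or> E v x) \<Longrightarrow> False"
    using nd rV unfolding dominated_def open_nbhd_def closed_nbhd_def by blast
  consider "cs = []" | a where "cs = [a]" | a b where "cs = [a,b]"
    using len by (cases cs; cases "tl cs"; auto)
  then show ?thesis
  proof cases
    case 1 then show ?thesis using rV by (auto simp: cn_iff)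
  next
    case (2 a)
    show ?thesis
    proof (cases "E a r")
      case True then show ?thesis using 2 sym inV by (auto simp: cn_iff intro!: bexI[of _ a])
    next
      case False then show ?thesis using 2 rn rV by (auto simp: cn_iff intro!: bexI[of _ r])
    qed
  next
    case (3 a b)
    have aV: "a \<in> V" and bV: "b \<in> V" using sub 3 by auto
    have ar: "a \<noteq> r" "b \<noteq> r" using rn 3 by auto
    show ?thesis
    proof (cases "\<exists>r'\<in>closed_nbhd E r. r' \<notin> closed_nbhd E a \<and> r' \<notin> closed_nbhd E b")
      case True
      then obtain r' where r': "r' \<in> closed_nbhd E r" "r' \<notin> closed_nbhd E a" "r' \<notin> closed_nbhd E b"
        by blast
      have "r' \<in> V" using r' rV inV by (auto simp: cn_iff)
      moreover have "r' \<noteq> a" "r' \<noteq> b" using r' by (auto simp: cn_iff)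
      ultimately show ?thesis using r' 3 by (intro bexI[of _ r']) auto
    next
      case False
      hence F: "\<And>x. x = r \<or> E r x \<Longrightarrow> (x = a \<or> E a x) \<or> (x = b \<or> E b x)"
        by (auto simp: cn_iff)
      have goodA: ?thesis if "E a r" "b \<noteq> a" "\<not> E a b"
        using that 3 aV sym by (intro bexI[of _ a]) (auto simp: cn_iff)
      have goodB: ?thesis if "E b r" "b \<noteq> a" "\<not> E b a"
        using that 3 bV sym by (intro bexI[of _ b]) (auto simp: cn_iff)
      have Er: "E a r \<or> E b r" using F[of r] ar sym by auto
      show ?thesis
      proof (cases "E a r \<and> E b r")
        case True
        show ?thesis
        proof (cases "a = b")
          case True
          have "\<And>x. E r x \<Longrightarrow> x = a \<or> E a x" using F \<open>a = b\<close> by blast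
          then show ?thesis using dom aV ar by blast
        next
          case False
          then show ?thesis using goodA True notri sym by blast
        qed
      next
        case nb: False
        show ?thesis
        proof (cases "E a r")
          case True
          hence nbr: "\<not> E b r" using nb by blast
          show ?thesis
          proof (cases "b \<noteq> a \<and> \<not> E a b")
            case True then show ?thesis using goodA \<open>E a r\<close> by blast
          next
            case False
            hence ab: "E a b" using nbr True by auto
            have "\<And>x. E r x \<Longrightarrow> x = b \<or> E b x"
            proof -
              fix x assume rx: "E r x"
              have "(x = a \<or> E a x) \<or> (x = b \<or> E b x)" using F rx by blast
              moreover have "\<not> E a x" using notri rx \<open>E a r\<close> sym by blast
              ultimately show "x = b \<or> E b x" using ab sym by blast
            qed
            then show ?thesis using dom bV ar by blast
          qed
        next
          case False
          hence br: "E b r" using Er by blast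
          show ?thesis
          proof (cases "b \<noteq> a \<and> \<not> E b a")
            case True then show ?thesis using goodB br by blast
          next
            case c: False
            hence ab: "E b a" using br False by auto
            have "\<And>x. E r x \<Longrightarrow> x = a \<or> E a x"
            proof -
              fix x assume rx: "E r x"
              have "(x = a \<or> E a x) \<or> (x = b \<or> E b x)" using F rx by blast
              moreover have "\<not> E b x" using notri rx br sym by blast
              ultimately show "x = a \<or> E a x" using ab sym by blast
            qed
            then show ?thesis using dom aV ar by blast
          qed
        qed
      qed
    qed
  qed
qed

lemma robber_survives:
  assumes g: "graph V E" and tf: "triangle_free V E" and nd: "\<forall>u\<in>V. \<not> dominated V E u"
  shows "cop_win E cs r \<Longrightarrow> set cs \<subseteq> V \<Longrightarrow> length cs \<le> 2 \<Longrightarrow> r \<in> V \<Longrightarrow>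
     (\<forall>c\<in>set cs. r \<notin> closed_nbhd E c) \<Longrightarrow> False"
proof (induction rule: cop_win.induct)
  case (move cs cs' r)
  have inV: "\<And>u v. E u v \<Longrightarrow> u \<in> V \<and> v \<in> V" using g unfolding graph_def by blast
  have len: "length cs' = length cs" using move.hyps(1) by (rule list_all2_lengthD[symmetric])
  have sub: "set cs' \<subseteq> V"
  proof
    fix c' assume "c' \<in> set cs'"
    then obtain i where i: "i < length cs'" "cs' ! i = c'" by (auto simp: in_set_conv_nth)
    have "c' \<in> closed_nbhd E (cs ! i)" using move.hyps(1) i list_all2_nthD2 by fastforce
    moreover have "cs ! i \<in> V" using move.prems(1) i len by auto
    ultimately show "c' \<in> V" using inV by (auto simp: cn_iff)
  qed
  have rn: "r \<notin> set cs'"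
  proof
    assume "r \<in> set cs'"
    then obtain i where i: "i < length cs'" "cs' ! i = r" by (auto simp: in_set_conv_nth)
    have "r \<in> closed_nbhd E (cs ! i)" using move.hyps(1) i list_all2_nthD2 by fastforce
    moreover have "cs ! i \<in> set cs" using i len by auto
    ultimately show False using move.prems(4) by blast
  qed
  obtain r' where r': "r' \<in> closed_nbhd E r" "r' \<in> V"
      "\<forall>c\<in>set (remove1 r' cs'). r' \<notin> closed_nbhd E c"
    using key_step[OF g tf nd sub _ move.prems(3) rn] move.prems(2) len by auto
  have "cop_win E (remove1 r' cs') r' \<and> (set (remove1 r' cs') \<subseteq> V \<longrightarrow> length (remove1 r' cs') \<le> 2 \<longrightarrow>
        r' \<in> V \<longrightarrow> (\<forall>c\<in>set (remove1 r' cs'). r' \<notin> closed_nbhd E c) \<longrightarrow> False)"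
    using move.IH rn r'(1) by blast
  moreover have "set (remove1 r' cs') \<subseteq> V" using sub set_remove1_subset by fastforce
  moreover have "length (remove1 r' cs') \<le> 2" using len move.prems(2) length_remove1
    by (metis diff_le_self le_trans)
  ultimately show False using r' by blast
qed

theorem lemma2:
  fixes V :: "'a set" and E :: "'a \<Rightarrow> 'a \<Rightarrow> bool"
  assumes "graph V E"
    and "connected_graph V E"
    and "triangle_free V E"
    and "\<forall>u\<in>V. \<not> dominated V E u"
    and "domination_number V E \<ge> 3"
  shows "attacking_cop_number V E > 2"
proof -
  have fin: "finite V" using assms(1) unfolding graph_def by blast
  obtain xs where xs: "set xs = V" using finite_list[OF fin] by blast
  have rel: "list_all2 (\<lambda>c c'. c' \<in> closed_nbhd E c) xs xs"
    by (simp add: list_all2_refl cn_iff)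
  have cw: "cop_win E xs r" if "r \<in> V" for r
    using cop_win.move[OF rel] that xs by blast
  have ex: "k_cops_win V E (length xs)"
    unfolding k_cops_win_def using cw xs by blast
  have no: "\<not> k_cops_win V E k" if "k \<le> 2" for k
  proof
    assume "k_cops_win V E k"
    then obtain cs where cs: "length cs = k" "set cs \<subseteq> V" "\<forall>r\<in>V. cop_win E cs r"
      unfolding k_cops_win_def by blast
    have "\<exists>r\<in>V. \<forall>c\<in>set cs. r \<notin> closed_nbhd E c"
    proof (rule ccontr)
      assume A: "\<not> ?thesis"
      have "dominating_set V E (set cs)"
        unfolding dominating_set_def
      proof (intro conjI ballI)
        fix v assume "v \<in> V"
        then obtain c where "c \<in> set cs" "v \<in> closed_nbhd E c" using A by blast
        then show "v \<in> set cs \<or> (\<exists>d\<in>set cs. E d v)" unfolding cn_iff by blast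
      qed (rule cs(2))
      hence "domination_number V E \<le> card (set cs)"
        unfolding domination_number_def by (intro Least_le) blast
      moreover have "card (set cs) \<le> 2" using card_length[of cs] cs(1) that by simp
      ultimately show False using assms(5) by simp
    qed
    then obtain r where "r \<in> V" "\<forall>c\<in>set cs. r \<notin> closed_nbhd E c" by blast
    moreover have "cop_win E cs r" using cs(3) \<open>r \<in> V\<close> by blast
    ultimately show False using robber_survives[OF assms(1) assms(3) assms(4), of cs r] cs that by blast
  qed
  have "k_cops_win V E (attacking_cop_number V E)"
    unfolding attacking_cop_number_def using ex by (rule LeastI)
  then have "\<not> attacking_cop_number V E \<le> 2" using no by blast
  then show ?thesis by simp
qed

end
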